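(* Let $M$ be the star matrix of a partition of the hypercube ${\bf Z}_q^n$ into subcubes all of the same dimension, let $T$ be a transfractal submatrix of $M$, let $t$ be a column of $M$ belonging to $T$ and let $s$ be a column of $M$ not belonging to $T$. Then either there is no row in which both $t$ and $s$ contain elements of ${\bf Z}_q$, or every row in which $t$ contains an element of ${\bf Z}_q$ also contains an element of ${\bf Z}_q$ in column $s$; and in the latter case there is a single $a\in{\bf Z}_q$ such that column $s$ contains $a$ in every row in which column $t$ contains an element of ${\bf Z}_q$.
   Context: A subcube of ${\bf Z}_q^n$ is obtained by fixing some coordinates and letting the others run through ${\bf Z}_q$; its dimension is the number of free coordinates, and its star pattern is the vector over ${\bf Z}_q\cup\{*\}$ with the fixed values in fixed coordinates and $*$ in free ones. The star matrix of a partition of ${\bf Z}_q^n$ into subcubes is the matrix whose rows are the star patterns of the subcubes. Fractal matrices: $M_{q,0}$ has one row and zero columns; for $m\ge1$, $M_{q,m}$ consists of $q$ horizontal blocks indexed by $a=0,\dots,q-1$, each with $q^{m-1}$ rows; its first column has entry $a$ in every row of block $a$; its remaining columns are divided into $q$ vertical stripes of width equal to the number of columns of $M_{q,m-1}$, and in block $a$ the $a$-th stripe is a copy of $M_{q,m-1}$ while other stripes of block $a$ are all $*$. A fractal matrix is any matrix obtained from some $M_{q,m}$ ($m\ge1$) by permuting rows and columns. A submatrix $T$ of $M$ (a set of rows and a set of columns, not necessarily consecutive) is a transfractal if $T$ is a fractal matrix and each column of $M$ used by $T$ contains only $*$ in all rows of $M$ not used by $T$. *)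

theory Defs
  imports Main
begin

text \<open>Points of Z_q^n are lists of length n with entries in {0..<q}.
  A star pattern is a list over nat option: Some a = fixed value a, None = star.\<close>

definition subcube :: "nat \<Rightarrow> nat option list \<Rightarrow> nat list set" where
  "subcube q p = {x. length x = length p \<and>
      (\<forall>i<length p. x ! i < q \<and> (\<forall>a. p ! i = Some a \<longrightarrow> x ! i = a))}"

definition hypercube :: "nat \<Rightarrow> nat \<Rightarrow> nat list set" where
  "hypercube q n = {x. length x = n \<and> (\<forall>i<n. x ! i < q)}"

definition star_pattern :: "nat \<Rightarrow> nat \<Rightarrow> nat option list \<Rightarrow> bool" where
  "star_pattern q n p \<longleftrightarrow> length p = n \<and> (\<forall>i<n. \<forall>a. p ! i = Some a \<longrightarrow> a < q)"

definition dim :: "nat option list \<Rightarrow> nat" where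
  "dim p = card {i. i < length p \<and> p ! i = None}"

text \<open>P is the set of star patterns (= set of rows of the star matrix) of a partition
  of Z_q^n into subcubes.\<close>
definition subcube_partition :: "nat \<Rightarrow> nat \<Rightarrow> nat option list set \<Rightarrow> bool" where
  "subcube_partition q n P \<longleftrightarrow>
     (\<forall>p\<in>P. star_pattern q n p) \<and>
     (\<forall>p\<in>P. \<forall>p'\<in>P. p \<noteq> p' \<longrightarrow> subcube q p \<inter> subcube q p' = {}) \<and>
     (\<Union>p\<in>P. subcube q p) = hypercube q n"

fun fcols :: "nat \<Rightarrow> nat \<Rightarrow> nat" where
  "fcols q 0 = 0"
| "fcols q (Suc m) = 1 + q * fcols q m"

text \<open>Entries of M_{q,m}: rows 0..<q^m (block a = rows a*q^(m-1) ..< (a+1)*q^(m-1)),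
  columns 0..<fcols q m; column 0 is the first column, stripe k occupies columns
  1 + k*fcols q (m-1) ..< 1 + (k+1)*fcols q (m-1).\<close>
fun fractal :: "nat \<Rightarrow> nat \<Rightarrow> nat \<Rightarrow> nat \<Rightarrow> nat option" where
  "fractal q 0 r c = None"
| "fractal q (Suc m) r c =
     (let a = r div q ^ m; r' = r mod q ^ m in
      if c = 0 then Some a
      else (let k = (c - 1) div fcols q m; j = (c - 1) mod fcols q m in
            if k = a then fractal q m r' j else None))"

definition is_fractal_submatrix ::
  "nat \<Rightarrow> ('r \<Rightarrow> 'c \<Rightarrow> nat option) \<Rightarrow> 'r set \<Rightarrow> 'c set \<Rightarrow> bool" where
  "is_fractal_submatrix q E S C \<longleftrightarrow>
     (\<exists>m \<ge> 1. \<exists>\<sigma> \<tau>. bij_betw \<sigma> {..<q ^ m} S \<and> bij_betw \<tau> {..<fcols q m} C \<and>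
        (\<forall>r < q ^ m. \<forall>c < fcols q m. E (\<sigma> r) (\<tau> c) = fractal q m r c))"

definition transfractal ::
  "nat \<Rightarrow> nat \<Rightarrow> nat option list set \<Rightarrow> nat option list set \<Rightarrow> nat set \<Rightarrow> bool" where
  "transfractal q n P S C \<longleftrightarrow>
     S \<subseteq> P \<and> C \<subseteq> {..<n} \<and>
     is_fractal_submatrix q (\<lambda>p j. p ! j) S C \<and>
     (\<forall>j\<in>C. \<forall>p\<in>P - S. p ! j = None)"

end

theory Submission
  imports Defs
begin

lemma fractal_conflict:
  assumes "q \<ge> 1" "r < q ^ m" "r' < q ^ m" "r \<noteq> r'"
  shows "\<exists>c < fcols q m. \<exists>a b. fractal q m r c = Some a \<and> fractal q m r' c = Some b \<and> a \<noteq> b"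
  using assms
proof (induction m arbitrary: r r')
  case 0
  then show ?case by simp
next
  case (Suc m)
  have qp: "q ^ m > 0" using Suc.prems by simp
  show ?case
  proof (cases "r div q ^ m = r' div q ^ m")
    case False
    then show ?thesis by (auto simp: Let_def)
  next
    case True
    have "r mod q ^ m \<noteq> r' mod q ^ m"
      using True Suc.prems(4) by (metis div_mod_decomp)
    moreover have "r mod q ^ m < q ^ m" "r' mod q ^ m < q ^ m" using qp by auto
    ultimately obtain j a b where j: "j < fcols q m" "fractal q m (r mod q ^ m) j = Some a"
      "fractal q m (r' mod q ^ m) j = Some b" "a \<noteq> b"
      using Suc.IH Suc.prems(1) by blast
    define k where "k = r div q ^ m"
    have kq: "k < q" using Suc.prems(2) qp unfolding k_def
      by (simp add: less_mult_imp_div_less mult.commute)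
    define c where "c = 1 + k * fcols q m + j"
    have c1: "(c - 1) div fcols q m = k" "(c - 1) mod fcols q m = j"
      using j(1) unfolding c_def by auto
    have "c < fcols q (Suc m)"
    proof -
      have "k * fcols q m + j < k * fcols q m + fcols q m" using j(1) by simp
      also have "\<dots> = (k+1) * fcols q m" by simp
      also have "\<dots> \<le> q * fcols q m" using kq by (intro mult_right_mono) auto
      finally show ?thesis unfolding c_def by simp
    qed
    moreover have "c \<noteq> 0" unfolding c_def by simp
    ultimately show ?thesis using j c1 True unfolding k_def
      by (intro exI[of _ c]) (auto simp: Let_def)
  qed
qed

definition fill :: "nat option list \<Rightarrow> (nat \<Rightarrow> nat) \<Rightarrow> nat list" where
  "fill p f = map (\<lambda>i. case p ! i of Some a \<Rightarrow> a | None \<Rightarrow> f i) [0..<length p]"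

lemma fill_in:
  assumes "star_pattern q n p" "\<And>i. f i < q"
  shows "fill p f \<in> subcube q p"
  using assms unfolding fill_def subcube_def star_pattern_def
  by (auto split: option.splits)

lemma fill_nth: "i < length p \<Longrightarrow> fill p f ! i = (case p ! i of Some a \<Rightarrow> a | None \<Rightarrow> f i)"
  unfolding fill_def by (simp add: nth_upt split: option.split)

lemma conflict:
  assumes "q \<ge> 1" "transfractal q n P S C" "p \<in> S" "p' \<in> S" "p \<noteq> p'"
  shows "\<exists>c\<in>C. \<exists>a b. p ! c = Some a \<and> p' ! c = Some b \<and> a \<noteq> b"
proof -
  obtain m \<sigma> \<tau> where m: "m \<ge> 1" "bij_betw \<sigma> {..<q ^ m} S" "bij_betw \<tau> {..<fcols q m} C"
    "\<forall>r < q ^ m. \<forall>c < fcols q m. \<sigma> r ! (\<tau> c) = fractal q m r c"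
    using assms(2) unfolding transfractal_def is_fractal_submatrix_def by blast
  obtain r where r: "r < q ^ m" "p = \<sigma> r" using m(2) assms(3) unfolding bij_betw_def by auto
  obtain r' where r': "r' < q ^ m" "p' = \<sigma> r'" using m(2) assms(4) unfolding bij_betw_def by auto
  have "r \<noteq> r'" using r r' assms(5) by auto
  then obtain c a b where "c < fcols q m" "fractal q m r c = Some a" "fractal q m r' c = Some b" "a \<noteq> b"
    using fractal_conflict[OF assms(1) r(1) r'(1)] by blast
  moreover have "\<tau> c \<in> C" using m(3) \<open>c < fcols q m\<close> unfolding bij_betw_def by auto
  ultimately show ?thesis using m(4) r r' by metis
qed

lemma key:
  assumes q2: "2 \<le> q" and part: "subcube_partition q n P" and tf: "transfractal q n P S C"
    and p1: "p1 \<in> S" and p2: "p2 \<in> S" and j: "j < n" "j \<notin> C" and a: "p1 ! j = Some a"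
  shows "p2 ! j = Some a"
proof -
  have SP: "S \<subseteq> P" "C \<subseteq> {..<n}" "\<forall>j\<in>C. \<forall>p\<in>P - S. p ! j = None"
    using tf unfolding transfractal_def by auto
  have pat: "\<And>p. p \<in> P \<Longrightarrow> star_pattern q n p" using part unfolding subcube_partition_def by auto
  have disj: "\<And>p p'. p \<in> P \<Longrightarrow> p' \<in> P \<Longrightarrow> p \<noteq> p' \<Longrightarrow> subcube q p \<inter> subcube q p' = {}"
    using part unfolding subcube_partition_def by auto
  have cover: "(\<Union>p\<in>P. subcube q p) = hypercube q n" using part unfolding subcube_partition_def by auto
  have len: "\<And>p. p \<in> P \<Longrightarrow> length p = n" using pat unfolding star_pattern_def by auto
  have main: "y ! j = a" if y: "y \<in> subcube q p2" for y
  proof -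
    have ly: "length y = n" "\<forall>i<n. y ! i < q" using y len[of p2] p2 SP unfolding subcube_def by auto
    define z where "z = map (\<lambda>i. if i \<in> C then (case p1 ! i of Some b \<Rightarrow> b | None \<Rightarrow> 0) else y ! i) [0..<n]"
    have zn: "\<And>i. i < n \<Longrightarrow> z ! i = (if i \<in> C then (case p1 ! i of Some b \<Rightarrow> b | None \<Rightarrow> 0) else y ! i)"
      unfolding z_def by simp
    have "z \<in> hypercube q n"
      unfolding hypercube_def
    proof (intro CollectI conjI allI impI)
      show "length z = n" unfolding z_def by simp
      fix i assume i: "i < n"
      show "z ! i < q"
      proof (cases "i \<in> C")
        case True
        then show ?thesis using zn[OF i] pat[of p1] p1 SP q2 i unfolding star_pattern_def
          by (cases "p1 ! i") auto
      qed (use zn[OF i] ly i in auto)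
    qed
    then obtain p' where p': "p' \<in> P" "z \<in> subcube q p'" using cover by blast
    have zp': "\<And>i b. i < n \<Longrightarrow> p' ! i = Some b \<Longrightarrow> z ! i = b"
      using p' len[OF p'(1)] unfolding subcube_def by auto
    have "p' \<in> S"
    proof (rule ccontr)
      assume ns: "p' \<notin> S"
      have "y \<in> subcube q p'"
        unfolding subcube_def
      proof (intro CollectI conjI allI impI)
        show "length y = length p'" using ly len[OF p'(1)] by simp
        fix i b assume i: "i < length p'" and b: "p' ! i = Some b"
        have "i \<notin> C" using SP(3) ns p'(1) b by auto
        then show "y ! i = b" using zp'[of i b] zn[of i] i b len[OF p'(1)] by auto
      next
        fix i assume "i < length p'" then show "y ! i < q" using ly len[OF p'(1)] by auto
      qed
      moreover have "p' \<noteq> p2" using ns p2 by auto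
      ultimately show False using disj[OF p'(1), of p2] p2 SP y by auto
    qed
    have "p' = p1"
    proof (rule ccontr)
      assume "p' \<noteq> p1"
      then obtain c a1 b where c: "c \<in> C" "p1 ! c = Some a1" "p' ! c = Some b" "a1 \<noteq> b"
        using conflict[OF _ tf p1 \<open>p' \<in> S\<close>] q2 by force
      have "c < n" using c SP(2) by auto
      then show False using zp'[OF _ c(3)] zn[of c] c by auto
    qed
    then have "z ! j = a" using zp'[OF j(1)] a by auto
    then show ?thesis using zn[OF j(1)] j by auto
  qed
  have p2pat: "star_pattern q n p2" using pat p2 SP by auto
  have l2: "length p2 = n" using len p2 SP by auto
  show ?thesis
  proof (cases "p2 ! j")
    case None
    define f :: "nat \<Rightarrow> nat" where "f = (\<lambda>i. if a = 0 then 1 else 0)"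
    have "fill p2 f \<in> subcube q p2" using fill_in[OF p2pat] q2 unfolding f_def by auto
    then have "fill p2 f ! j = a" using main by blast
    then show ?thesis using fill_nth[of j p2 f] None j l2 unfolding f_def by (auto split: if_splits)
  next
    case (Some b)
    have "fill p2 (\<lambda>_. 0) \<in> subcube q p2" using fill_in[OF p2pat] q2 by auto
    then have "fill p2 (\<lambda>_. 0) ! j = a" using main by blast
    then show ?thesis using fill_nth[of j p2] Some j l2 by auto
  qed
qed

theorem corollary1:
  fixes q n :: nat and P S :: "nat option list set" and C :: "nat set" and t s :: nat
  assumes "2 \<le> q"
    and "subcube_partition q n P"
    and "\<exists>d. \<forall>p\<in>P. dim p = d"
    and "transfractal q n P S C"
    and "t \<in> C" and "s < n" and "s \<notin> C"
  shows "(\<not> (\<exists>p\<in>P. p ! t \<noteq> None \<and> p ! s \<noteq> None))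
       \<or> ((\<forall>p\<in>P. p ! t \<noteq> None \<longrightarrow> p ! s \<noteq> None) \<and>
          (\<exists>a < q. \<forall>p\<in>P. p ! t \<noteq> None \<longrightarrow> p ! s = Some a))"
proof (cases "\<exists>p\<in>P. p ! t \<noteq> None \<and> p ! s \<noteq> None")
  case False
  then show ?thesis by blast
next
  case True
  have inS: "\<And>p. p \<in> P \<Longrightarrow> p ! t \<noteq> None \<Longrightarrow> p \<in> S"
    using assms(4,5) unfolding transfractal_def by (metis DiffI)
  obtain p a where p: "p \<in> P" "p ! t \<noteq> None" "p ! s = Some a" using True by blast
  have "a < q" using assms(2,6) p unfolding subcube_partition_def star_pattern_def by blast
  moreover have "\<forall>p'\<in>P. p' ! t \<noteq> None \<longrightarrow> p' ! s = Some a"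
    using key[OF assms(1,2,4) inS[OF p(1,2)] _ assms(6,7) p(3)] inS by blast
  ultimately show ?thesis by blast
qed
end
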